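(* Let $f:\Sigma\to\mathbb{S}^4_1$ be a non-isotropic conformal marginally trapped immersion with null Gauss map $G:\Sigma\to\mathbb{S}^3$. Then $G$ is an envelope of the sphere congruence determined by $f$: every local lift $W$ of $G$ satisfies $\langle f,W\rangle=0$ and $\langle f,dW\rangle=0$. Moreover, the central sphere congruence of $G$ coincides with the one determined by $\pm f$, i.e. $V=f^\perp$ at every point, where $V=\mathrm{span}\{X,X_z,X_{\bar z},X_{z\bar z}\}$ for any local lift $X$ of $G$.
   Context: $\mathbb{R}^5_1$ is $\mathbb{R}^5$ with Lorentz product $\langle x,y\rangle=x_0y_0+x_1y_1+x_2y_2+x_3y_3-x_4y_4$, extended complex-bilinearly; $\mathbb{S}^4_1=\{\langle x,x\rangle=1\}$; $X$ future pointing means $\langle X,e_4\rangle<0$; $\mathcal L$ is the light cone and $\mathbb{S}^3\cong P(\mathcal L)$. $f:\Sigma\to\mathbb{S}^4_1$ is a conformal spacelike immersion, $\langle f_z,f_{\bar z}\rangle=e^{2u}$. A positively oriented orthonormal frame $\{N_1,N_2\}$ of the oriented Lorentzian normal bundle has $\langle N_1,N_1\rangle=1$, $\langle N_2,N_2\rangle=-1$, $\langle N_1,N_2\rangle=0$, $N_2$ future pointing and the orientation of $\nu(f)$. $\xi_1=\langle f_{zz},N_1\rangle$, $\xi_2=-\langle f_{zz},N_2\rangle$. $\mathbf H$ is defined by $f_{z\bar z}=-e^{2u}f+e^{2u}\mathbf H$; marginally trapped means $\langle\mathbf H,\mathbf H\rangle=0$, orientation chosen with $\mathbf H=h(N_1+N_2)$.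 $f$ is non-isotropic if $\langle f_{zz},f_{zz}\rangle=\xi_1^2-\xi_2^2$ never vanishes (then $\xi_1\ne\xi_2$ everywhere and $G$ is a conformal immersion). The null Gauss map is $G(x)=[N_1(x)+N_2(x)]$; a local lift of $G$ is a map $W$ into $\mathcal L$ with $[W]=G$. The sphere congruence determined by $f$ assigns to $x$ the $2$-sphere $P(f(x)^\perp\cap\mathcal L)\subset\mathbb{S}^3$; the central sphere congruence of $G$ is the rank 4 bundle $V$ (spheres $P(V_x\cap\mathcal L)$). *)

theory Defs
  imports "HOL-Analysis.Analysis"
begin

text \<open>Index 4 of type 5 is the timelike coordinate x_4.\<close>

definition lor :: "real^5 \<Rightarrow> real^5 \<Rightarrow> real" where
  "lor x y = x$0*y$0 + x$1*y$1 + x$2*y$2 + x$3*y$3 - x$4*y$4"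

definition clor :: "complex^5 \<Rightarrow> complex^5 \<Rightarrow> complex" where
  "clor x y = x$0*y$0 + x$1*y$1 + x$2*y$2 + x$3*y$3 - x$4*y$4"

definition e4 :: "real^5" where "e4 = axis 4 1"

definition cplx :: "real^5 \<Rightarrow> complex^5" where
  "cplx v = (\<chi> i. complex_of_real (v$i))"

definition cscale :: "complex \<Rightarrow> complex^5 \<Rightarrow> complex^5" where
  "cscale c v = (\<chi> i. c * v$i)"

definition pdx :: "(complex \<Rightarrow> 'a::real_normed_vector) \<Rightarrow> complex \<Rightarrow> 'a" where
  "pdx g p = vector_derivative (\<lambda>t::real. g (p + complex_of_real t)) (at 0)"

definition pdy :: "(complex \<Rightarrow> 'a::real_normed_vector) \<Rightarrow> complex \<Rightarrow> 'a" where
  "pdy g p = vector_derivative (\<lambda>t::real. g (p + \<i> * complex_of_real t)) (at 0)"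

definition dz :: "(complex \<Rightarrow> complex^5) \<Rightarrow> complex \<Rightarrow> complex^5" where
  "dz G p = cscale (1/2) (pdx G p - cscale \<i> (pdy G p))"

definition dzb :: "(complex \<Rightarrow> complex^5) \<Rightarrow> complex \<Rightarrow> complex^5" where
  "dzb G p = cscale (1/2) (pdx G p + cscale \<i> (pdy G p))"

fun Ck :: "nat \<Rightarrow> complex set \<Rightarrow> (complex \<Rightarrow> 'a::real_normed_vector) \<Rightarrow> bool" where
  "Ck 0 U g = continuous_on U g"
| "Ck (Suc k) U g = ((\<forall>p\<in>U. g differentiable (at p)) \<and> Ck k U (pdx g) \<and> Ck k U (pdy g))"

definition smooth_on :: "complex set \<Rightarrow> (complex \<Rightarrow> 'a::real_normed_vector) \<Rightarrow> bool" where
  "smooth_on U g = (\<forall>k. Ck k U g)"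

text \<open>A (smooth) local lift of the null Gauss map G = [N1 + N2] on U:
  a smooth map into the light cone minus 0 whose line is spanned by N1 + N2.\<close>
definition is_lift :: "complex set \<Rightarrow> (complex \<Rightarrow> real^5) \<Rightarrow> (complex \<Rightarrow> real^5)
    \<Rightarrow> (complex \<Rightarrow> real^5) \<Rightarrow> bool" where
  "is_lift U N1 N2 W = (smooth_on U W \<and>
     (\<forall>p\<in>U. W p \<noteq> 0 \<and> lor (W p) (W p) = 0 \<and> (\<exists>c::real. W p = c *\<^sub>R (N1 p + N2 p))))"

end

theory Submission
  imports Defs
begin


lemma span5:
  fixes v0 v1 v2 v3 v4 w :: "complex^5"
  assumes ind: "\<And>a b c d e. a *s v0 + b *s v1 + c *s v2 + d *s v3 + e *s v4 = 0 \<Longrightarrow> a=0 \<and> b=0 \<and> c=0 \<and> d=0 \<and> e=0"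
  shows "\<exists>a b c d e. w = a *s v0 + b *s v1 + c *s v2 + d *s v3 + e *s v4"
proof -
  have d01: "v0 \<noteq> v1" using ind[of 1 "-1" 0 0 0] by auto
  have d02: "v0 \<noteq> v2" using ind[of 1 0 "-1" 0 0] by auto
  have d03: "v0 \<noteq> v3" using ind[of 1 0 0 "-1" 0] by auto
  have d04: "v0 \<noteq> v4" using ind[of 1 0 0 0 "-1"] by auto
  have d12: "v1 \<noteq> v2" using ind[of 0 1 "-1" 0 0] by auto
  have d13: "v1 \<noteq> v3" using ind[of 0 1 0 "-1" 0] by auto
  have d14: "v1 \<noteq> v4" using ind[of 0 1 0 0 "-1"] by auto
  have d23: "v2 \<noteq> v3" using ind[of 0 0 1 "-1" 0] by auto
  have d24: "v2 \<noteq> v4" using ind[of 0 0 1 0 "-1"] by auto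
  have d34: "v3 \<noteq> v4" using ind[of 0 0 0 1 "-1"] by auto
  let ?B = "{v0,v1,v2,v3,v4}"
  have fin: "finite ?B" by simp
  have card: "card ?B = 5" using d01 d02 d03 d04 d12 d13 d14 d23 d24 d34 by simp
  have "vec.independent ?B"
    unfolding vec.independent_explicit
  proof (intro conjI fin allI impI)
    fix c assume "(\<Sum>v\<in>?B. c v *s v) = 0"
    then have "c v0 *s v0 + c v1 *s v1 + c v2 *s v2 + c v3 *s v3 + c v4 *s v4 = 0"
      using d01 d02 d03 d04 d12 d13 d14 d23 d24 d34 by (simp add: add.assoc)
    from ind[OF this] show "\<forall>v\<in>?B. c v = 0" by auto
  qed
  moreover have "vec.dim (UNIV :: (complex^5) set) \<le> card ?B" using card vec_dim_card[where 'a=complex and 'n=5] by simp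
  ultimately have "UNIV \<subseteq> vec.span ?B" using vec.card_ge_dim_independent[of ?B UNIV] by auto
  then have "w \<in> range (\<lambda>u. \<Sum>v\<in>?B. u v *s v)" using vec.span_finite[OF fin] by auto
  then obtain u where "w = (\<Sum>v\<in>?B. u v *s v)" by auto
  then have "w = u v0 *s v0 + u v1 *s v1 + u v2 *s v2 + u v3 *s v3 + u v4 *s v4"
    using d01 d02 d03 d04 d12 d13 d14 d23 d24 d34 by (simp add: add.assoc)
  then show ?thesis by blast
qed



lemma cscale_eq: "cscale c v = c *s v" by (simp add: cscale_def vector_scalar_mult_def)

lemma clor_add_left: "clor (x + y) z = clor x z + clor y z" by (simp add: clor_def algebra_simps)
lemma clor_add_right: "clor z (x + y) = clor z x + clor z y" by (simp add: clor_def algebra_simps)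
lemma clor_diff_left: "clor (x - y) z = clor x z - clor y z" by (simp add: clor_def algebra_simps)
lemma clor_diff_right: "clor z (x - y) = clor z x - clor z y" by (simp add: clor_def algebra_simps)
lemma clor_smult_left: "clor (c *s x) z = c * clor x z" by (simp add: clor_def algebra_simps)
lemma clor_smult_right: "clor z (c *s x) = c * clor z x" by (simp add: clor_def algebra_simps)
lemma clor_sym: "clor x y = clor y x" by (simp add: clor_def algebra_simps)
lemma clor_zero_left[simp]: "clor 0 x = 0" by (simp add: clor_def)
lemma clor_zero_right[simp]: "clor x 0 = 0" by (simp add: clor_def)
lemmas clor_lin = clor_add_left clor_add_right clor_diff_left clor_diff_right clor_smult_left clor_smult_right

lemma clor_scaleR_left: "clor (r *\<^sub>R x) z = r *\<^sub>R clor x z" unfolding clor_def vector_scaleR_component by (simp add: algebra_simps scaleR_conv_of_real)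
lemma clor_scaleR_right: "clor z (r *\<^sub>R x) = r *\<^sub>R clor z x" unfolding clor_def vector_scaleR_component by (simp add: algebra_simps scaleR_conv_of_real)

lemma bb_clor: "bounded_bilinear clor"
proof
  fix a a' b b' :: "complex^5" and r :: real
  show "clor (a + a') b = clor a b + clor a' b" by (rule clor_add_left)
  show "clor b (a + a') = clor b a + clor b a'" by (rule clor_add_right)
  show "clor (r *\<^sub>R a) b = r *\<^sub>R clor a b" by (rule clor_scaleR_left)
  show "clor a (r *\<^sub>R b) = r *\<^sub>R clor a b" by (rule clor_scaleR_right)
next
  show "\<exists>K. \<forall>x y. norm (clor x y) \<le> norm x * norm y * K"
  proof (intro exI allI)
    fix x y :: "complex^5"
    have t: "norm (x$i * y$i) \<le> norm x * norm y" for i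
      using mult_mono[OF Finite_Cartesian_Product.norm_nth_le[of x i] Finite_Cartesian_Product.norm_nth_le[of y i]] by (simp add: norm_mult)
    have "norm (clor x y) \<le> norm (x$0*y$0) + norm (x$1*y$1) + norm (x$2*y$2) + norm (x$3*y$3) + norm (x$4*y$4)"
      unfolding clor_def by (intro order.trans[OF norm_triangle_ineq4] order.trans[OF norm_triangle_ineq] add_mono order_refl)
    also have "\<dots> \<le> norm x * norm y * 5" using t[of 0] t[of 1] t[of 2] t[of 3] t[of 4] by simp
    finally show "norm (clor x y) \<le> norm x * norm y * 5" .
  qed
qed

lemma pdx_deriv:
  assumes "(g has_derivative g') (at p)"
  shows "pdx g p = g' 1"
proof -
  have l: "linear g'" using assms has_derivative_linear by blast
  have "((\<lambda>t::real. p + complex_of_real t) has_derivative (\<lambda>t. complex_of_real t)) (at 0)"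
    by (auto intro!: derivative_eq_intros)
  from has_derivative_compose[OF this, of g g'] assms
  have "((\<lambda>t. g (p + complex_of_real t)) has_derivative (\<lambda>t. g' (complex_of_real t))) (at 0)"
    by (simp add: o_def)
  moreover have "g' (complex_of_real t) = t *\<^sub>R g' 1" for t
    using linear_scale[OF l, of t 1] by (simp add: scaleR_conv_of_real)
  ultimately have "((\<lambda>t. g (p + complex_of_real t)) has_vector_derivative g' 1) (at 0)"
    unfolding has_vector_derivative_def by simp
  then show ?thesis unfolding pdx_def by (rule vector_derivative_at)
qed

lemma pdy_deriv:
  assumes "(g has_derivative g') (at p)"
  shows "pdy g p = g' \<i>"
proof -
  have l: "linear g'" using assms has_derivative_linear by blast
  have "((\<lambda>t::real. p + \<i> * complex_of_real t) has_derivative (\<lambda>t. \<i> * complex_of_real t)) (at 0)"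
    by (auto intro!: derivative_eq_intros)
  from has_derivative_compose[OF this, of g g'] assms
  have "((\<lambda>t. g (p + \<i> * complex_of_real t)) has_derivative (\<lambda>t. g' (\<i> * complex_of_real t))) (at 0)"
    by (simp add: o_def)
  moreover have "g' (\<i> * complex_of_real t) = t *\<^sub>R g' \<i>" for t
    using linear_scale[OF l, of t \<i>] by (simp add: scaleR_conv_of_real mult.commute)
  ultimately have "((\<lambda>t. g (p + \<i> * complex_of_real t)) has_vector_derivative g' \<i>) (at 0)"
    unfolding has_vector_derivative_def by simp
  then show ?thesis unfolding pdy_def by (rule vector_derivative_at)
qed

lemma prod_rule:
  fixes A B :: "complex \<Rightarrow> complex^5"
  assumes "A differentiable (at p)" "B differentiable (at p)"
  shows "pdx (\<lambda>q. clor (A q) (B q)) p = clor (pdx A p) (B p) + clor (A p) (pdx B p)"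
    and "pdy (\<lambda>q. clor (A q) (B q)) p = clor (pdy A p) (B p) + clor (A p) (pdy B p)"
proof -
  obtain A' where A: "(A has_derivative A') (at p)" using assms(1) by (auto simp: differentiable_def)
  obtain B' where B: "(B has_derivative B') (at p)" using assms(2) by (auto simp: differentiable_def)
  have D: "((\<lambda>q. clor (A q) (B q)) has_derivative (\<lambda>h. clor (A p) (B' h) + clor (A' h) (B p))) (at p)"
    using bounded_bilinear.FDERIV[OF bb_clor A B] .
  show "pdx (\<lambda>q. clor (A q) (B q)) p = clor (pdx A p) (B p) + clor (A p) (pdx B p)"
    using pdx_deriv[OF D] pdx_deriv[OF A] pdx_deriv[OF B] by simp
  show "pdy (\<lambda>q. clor (A q) (B q)) p = clor (pdy A p) (B p) + clor (A p) (pdy B p)"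
    using pdy_deriv[OF D] pdy_deriv[OF A] pdy_deriv[OF B] by simp
qed

lemma const_on_open:
  fixes s :: "complex \<Rightarrow> complex"
  assumes "open U" "p \<in> U" "\<forall>q\<in>U. s q = k"
  shows "pdx s p = 0" "pdy s p = 0"
proof -
  have "((\<lambda>q. k) has_derivative (\<lambda>_. 0)) (at p)" by simp
  then have D: "(s has_derivative (\<lambda>_. 0)) (at p)"
    by (rule has_derivative_transform_within_open[OF _ assms(1,2)]) (use assms(3) in auto)
  show "pdx s p = 0" using pdx_deriv[OF D] by simp
  show "pdy s p = 0" using pdy_deriv[OF D] by simp
qed

lemma dz_rule:
  fixes A B :: "complex \<Rightarrow> complex^5"
  assumes "open U" "p \<in> U" "\<forall>q\<in>U. clor (A q) (B q) = k"
    "A differentiable (at p)" "B differentiable (at p)"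
  shows "clor (dz A p) (B p) + clor (A p) (dz B p) = 0"
    and "clor (dzb A p) (B p) + clor (A p) (dzb B p) = 0"
proof -
  have x: "clor (pdx A p) (B p) + clor (A p) (pdx B p) = 0"
    using prod_rule(1)[OF assms(4,5)] const_on_open(1)[OF assms(1-3)] by simp
  have y: "clor (pdy A p) (B p) + clor (A p) (pdy B p) = 0"
    using prod_rule(2)[OF assms(4,5)] const_on_open(2)[OF assms(1-3)] by (simp add: o_def)
  have "clor (dz A p) (B p) + clor (A p) (dz B p) =
        (1/2) * (clor (pdx A p) (B p) + clor (A p) (pdx B p)) - (\<i>/2) * (clor (pdy A p) (B p) + clor (A p) (pdy B p))"
    unfolding dz_def cscale_eq by (simp add: clor_lin algebra_simps)
  then show "clor (dz A p) (B p) + clor (A p) (dz B p) = 0" using x y by simp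
  have "clor (dzb A p) (B p) + clor (A p) (dzb B p) =
        (1/2) * (clor (pdx A p) (B p) + clor (A p) (pdx B p)) + (\<i>/2) * (clor (pdy A p) (B p) + clor (A p) (pdy B p))"
    unfolding dzb_def cscale_eq by (simp add: clor_lin algebra_simps)
  then show "clor (dzb A p) (B p) + clor (A p) (dzb B p) = 0" using x y by simp
qed



lemma linear_cplx: "linear cplx"
  by (rule linearI) (simp_all add: cplx_def vec_eq_iff, simp add: scaleR_conv_of_real)
lemma bl_cplx: "bounded_linear cplx"
  using linear_cplx linear_conv_bounded_linear by blast

lemma clor_cplx: "clor (cplx a) (cplx b) = complex_of_real (lor a b)"
  by (simp add: clor_def lor_def cplx_def)

lemma cplx_eq0: "cplx a = 0 \<longleftrightarrow> a = 0"
  by (simp add: cplx_def vec_eq_iff)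

lemma cplx_add: "cplx (a + b) = cplx a + cplx b" by (simp add: cplx_def vec_eq_iff)
lemma cplx_scaleR: "cplx (r *\<^sub>R a) = complex_of_real r *s cplx a" by (simp add: cplx_def vec_eq_iff)

lemma cplx_deriv:
  fixes g :: "complex \<Rightarrow> real^5"
  assumes "g differentiable (at p)"
  shows "(cplx \<circ> g) differentiable (at p)" "pdx (cplx \<circ> g) p = cplx (pdx g p)" "pdy (cplx \<circ> g) p = cplx (pdy g p)"
proof -
  obtain g' where G: "(g has_derivative g') (at p)" using assms by (auto simp: differentiable_def)
  have D: "((cplx \<circ> g) has_derivative (cplx \<circ> g')) (at p)"
    using has_derivative_compose[OF G bounded_linear.has_derivative[OF bl_cplx has_derivative_ident]]
    by (simp add: o_def)
  then show "(cplx \<circ> g) differentiable (at p)" by (auto simp: differentiable_def)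
  show "pdx (cplx \<circ> g) p = cplx (pdx g p)" using pdx_deriv[OF D] pdx_deriv[OF G] by simp
  show "pdy (cplx \<circ> g) p = cplx (pdy g p)" using pdy_deriv[OF D] pdy_deriv[OF G] by simp
qed

definition cconj :: "complex^5 \<Rightarrow> complex^5" where "cconj v = (\<chi> i. cnj (v$i))"

lemma cconj_cplx[simp]: "cconj (cplx a) = cplx a" by (simp add: cconj_def cplx_def vec_eq_iff)
lemma cconj_cconj[simp]: "cconj (cconj a) = a" by (simp add: cconj_def vec_eq_iff)
lemma clor_cconj: "clor (cconj x) (cconj y) = cnj (clor x y)" by (simp add: cconj_def clor_def)

lemma dzb_conj:
  fixes g :: "complex \<Rightarrow> real^5"
  assumes "g differentiable (at p)"
  shows "dzb (cplx \<circ> g) p = cconj (dz (cplx \<circ> g) p)"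
  unfolding dz_def dzb_def cplx_deriv[OF assms] cscale_def
  by (simp add: cconj_def cplx_def vec_eq_iff)

lemma dz_cplx_differentiable:
  fixes g :: "complex \<Rightarrow> real^5"
  assumes "open U" "p \<in> U" "\<forall>q\<in>U. g differentiable (at q)"
    "pdx g differentiable (at p)" "pdy g differentiable (at p)"
  shows "dz (cplx \<circ> g) differentiable (at p)"
proof -
  define M where "M = (\<lambda>v. cscale (1/2) (cplx v))"
  define M' where "M' = (\<lambda>v. cscale (- \<i>/2) (cplx v))"
  have lM: "bounded_linear M" unfolding M_def
    by (rule iffD1[OF linear_conv_bounded_linear], rule linearI) (simp_all add: cplx_def cscale_def vec_eq_iff algebra_simps, simp add: scaleR_conv_of_real)
  have lM': "bounded_linear M'" unfolding M'_def
    by (rule iffD1[OF linear_conv_bounded_linear], rule linearI) (simp_all add: cplx_def cscale_def vec_eq_iff algebra_simps, simp add: scaleR_conv_of_real)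
  have d1: "(\<lambda>q. M (pdx g q)) differentiable (at p)"
    using differentiable_chain_at[OF assms(4) bounded_linear_imp_differentiable[OF lM]] by (simp add: o_def)
  have d2: "(\<lambda>q. M' (pdy g q)) differentiable (at p)"
    using differentiable_chain_at[OF assms(5) bounded_linear_imp_differentiable[OF lM']] by (simp add: o_def)
  have "(\<lambda>q. M (pdx g q) + M' (pdy g q)) differentiable (at p)"
    using differentiable_add[OF d1 d2] .
  then obtain D where D: "((\<lambda>q. M (pdx g q) + M' (pdy g q)) has_derivative D) (at p)"
    by (auto simp: differentiable_def)
  have "(dz (cplx \<circ> g) has_derivative D) (at p)"
  proof (rule has_derivative_transform_within_open[OF D assms(1,2)])
    fix q assume "q \<in> U"
    then show "M (pdx g q) + M' (pdy g q) = dz (cplx \<circ> g) q"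
      unfolding dz_def cplx_deriv[OF assms(3)[rule_format, OF \<open>q\<in>U\<close>]] M_def M'_def
      by (simp add: cscale_def cplx_def vec_eq_iff algebra_simps)
  qed
  then show ?thesis by (auto simp: differentiable_def)
qed



lemma parseval:
  fixes F Fz Fzb N1 N2 w w' :: "complex^5" and e :: complex
  assumes e: "e \<noteq> 0"
  and g: "clor F F = 1" "clor F Fz = 0" "clor F Fzb = 0" "clor F N1 = 0" "clor F N2 = 0"
   "clor Fz Fz = 0" "clor Fzb Fzb = 0" "clor Fz Fzb = e" "clor Fz N1 = 0" "clor Fz N2 = 0"
   "clor Fzb N1 = 0" "clor Fzb N2 = 0"
   "clor N1 N1 = 1" "clor N2 N2 = -1" "clor N1 N2 = 0"
  shows "clor w w' = clor w F * clor w' F + (clor w Fzb * clor w' Fz + clor w Fz * clor w' Fzb)/e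
             + clor w N1 * clor w' N1 - clor w N2 * clor w' N2"
proof -
  have gs: "clor Fz F = 0" "clor Fzb F = 0" "clor N1 F = 0" "clor N2 F = 0" "clor Fzb Fz = e"
    "clor N1 Fz = 0" "clor N2 Fz = 0" "clor N1 Fzb = 0" "clor N2 Fzb = 0" "clor N2 N1 = 0"
    using g by (simp_all add: clor_sym)
  have ind: "a=0 \<and> b=0 \<and> c=0 \<and> d=0 \<and> h=0"
    if z: "a *s F + b *s Fz + c *s Fzb + d *s N1 + h *s N2 = 0" for a b c d h
  proof -
    let ?v = "a *s F + b *s Fz + c *s Fzb + d *s N1 + h *s N2"
    have "clor ?v F = a" "clor ?v Fzb = b * e" "clor ?v Fz = c * e" "clor ?v N1 = d" "clor ?v N2 = - h"
      using g gs by (simp_all add: clor_lin)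
    then show ?thesis unfolding z using e by simp
  qed
  obtain a b c d h where w: "w = a *s F + b *s Fz + c *s Fzb + d *s N1 + h *s N2"
    using span5[OF ind] by blast
  have c1: "clor w F = a" "clor w Fzb = b * e" "clor w Fz = c * e" "clor w N1 = d" "clor w N2 = - h"
    unfolding w using g gs by (simp_all add: clor_lin)
  have "clor w w' = a * clor F w' + b * clor Fz w' + c * clor Fzb w' + d * clor N1 w' + h * clor N2 w'"
    unfolding w by (simp add: clor_lin)
  then show ?thesis using c1 e by (simp add: clor_sym[of _ w'] field_simps)
qed



lemma lor_add_left: "lor (x + y) z = lor x z + lor y z" by (simp add: lor_def algebra_simps)
lemma lor_add_right: "lor z (x + y) = lor z x + lor z y" by (simp add: lor_def algebra_simps)
lemma lor_scaleR_left: "lor (r *\<^sub>R x) z = r * lor x z" by (simp add: lor_def algebra_simps)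
lemma lor_scaleR_right: "lor z (r *\<^sub>R x) = r * lor z x" by (simp add: lor_def algebra_simps)
lemma lor_diff_right: "lor z (x - y) = lor z x - lor z y" by (simp add: lor_def algebra_simps)
lemma lor_minus_left: "lor (- x) z = - lor x z" by (simp add: lor_def algebra_simps)
lemma lor_sym: "lor x y = lor y x" by (simp add: lor_def algebra_simps)
lemmas lor_lin = lor_diff_right lor_add_left lor_add_right lor_scaleR_left lor_scaleR_right lor_minus_left

lemma smooth_C2:
  assumes "smooth_on U g"
  shows "\<forall>q\<in>U. g differentiable (at q)" "\<forall>q\<in>U. pdx g differentiable (at q)" "\<forall>q\<in>U. pdy g differentiable (at q)"
proof -
  have "Ck (Suc (Suc 0)) U g" using assms unfolding smooth_on_def by blast
  then show "\<forall>q\<in>U. g differentiable (at q)" "\<forall>q\<in>U. pdx g differentiable (at q)" "\<forall>q\<in>U. pdy g differentiable (at q)"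
    by simp_all
qed

lemma dz_expand:
  fixes g :: "complex \<Rightarrow> real^5"
  assumes "g differentiable (at p)"
  shows "dz (cplx \<circ> g) p = (1/2) *s (cplx (pdx g p) - \<i> *s cplx (pdy g p))"
  unfolding dz_def cplx_deriv[OF assms] cscale_eq ..

lemma clor_dz_cplx:
  fixes g :: "complex \<Rightarrow> real^5"
  assumes "g differentiable (at p)" "lor (pdx g p) a = 0" "lor (pdy g p) a = 0"
  shows "clor (dz (cplx \<circ> g) p) (cplx a) = 0"
  using assms unfolding dz_expand[OF assms(1)] by (simp add: clor_lin clor_cplx)

lemma clor_conj_real: "clor (cconj x) (cplx a) = cnj (clor x (cplx a))"
  by (metis clor_cconj cconj_cplx)



theorem mainTheorem4:
  fixes U :: "complex set"
    and f N1 N2 H :: "complex \<Rightarrow> real^5"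
    and u h :: "complex \<Rightarrow> real"
  assumes U: "open U" "connected U" "U \<noteq> {}"
    and smooth: "smooth_on U f" "smooth_on U u" "smooth_on U N1" "smooth_on U N2"
    and sphere: "\<forall>p\<in>U. lor (f p) (f p) = 1"
    and conformal: "\<forall>p\<in>U. clor (dz (cplx \<circ> f) p) (dz (cplx \<circ> f) p) = 0
                          \<and> clor (dz (cplx \<circ> f) p) (dzb (cplx \<circ> f) p) = complex_of_real (exp (2 * u p))"
    and normal: "\<forall>p\<in>U. lor (N1 p) (f p) = 0 \<and> lor (N1 p) (pdx f p) = 0 \<and> lor (N1 p) (pdy f p) = 0
                      \<and> lor (N2 p) (f p) = 0 \<and> lor (N2 p) (pdx f p) = 0 \<and> lor (N2 p) (pdy f p) = 0"
    and frame: "\<forall>p\<in>U. lor (N1 p) (N1 p) = 1 \<and> lor (N2 p) (N2 p) = -1 \<and> lor (N1 p) (N2 p) = 0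
                      \<and> lor (N2 p) e4 < 0"
    and meancurv: "\<forall>p\<in>U. dzb (dz (cplx \<circ> f)) p
                      = cplx (- exp (2 * u p) *\<^sub>R f p + exp (2 * u p) *\<^sub>R H p)"
    and marg_trapped: "\<forall>p\<in>U. lor (H p) (H p) = 0"
    and orient: "\<forall>p\<in>U. H p = h p *\<^sub>R (N1 p + N2 p)"
    and nonisotropic: "\<forall>p\<in>U. clor (dz (dz (cplx \<circ> f)) p) (dz (dz (cplx \<circ> f)) p) \<noteq> 0"
  shows "(\<forall>W. is_lift U N1 N2 W \<longrightarrow>
            (\<forall>p\<in>U. lor (f p) (W p) = 0 \<and> lor (f p) (pdx W p) = 0 \<and> lor (f p) (pdy W p) = 0))
       \<and> (\<forall>X. is_lift U N1 N2 X \<longrightarrow>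
            (\<forall>p\<in>U. {v. \<exists>a b c d. v = cscale a (cplx (X p)) + cscale b (dz (cplx \<circ> X) p)
                                   + cscale c (dzb (cplx \<circ> X) p) + cscale d (dzb (dz (cplx \<circ> X)) p)}
                     = {v. clor (cplx (f p)) v = 0}))"
proof -
  define F where "F = cplx \<circ> f"
  define E where "E = (\<lambda>q. complex_of_real (exp (2 * u q)))"
  note fC = smooth_C2[OF smooth(1)]
  have Fd: "\<forall>q\<in>U. F differentiable (at q)" using fC(1) cplx_deriv(1) unfolding F_def by blast
  have dzFd: "\<forall>q\<in>U. dz F differentiable (at q)"
    using dz_cplx_differentiable[OF U(1) _ fC(1)] fC(2,3) unfolding F_def by blast
  have FF: "\<forall>q\<in>U. clor (F q) (F q) = 1" using sphere by (simp add: F_def clor_cplx)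
  have FN: "\<forall>q\<in>U. clor (F q) (cplx (N1 q)) = 0 \<and> clor (F q) (cplx (N2 q)) = 0"
    using normal by (simp add: F_def clor_cplx lor_sym)
  have FzN: "\<forall>q\<in>U. clor (dz F q) (cplx (N1 q)) = 0 \<and> clor (dz F q) (cplx (N2 q)) = 0"
    using normal fC(1) clor_dz_cplx unfolding F_def by (metis lor_sym)
  have dzbF: "\<forall>q\<in>U. dzb F q = cconj (dz F q)" using fC(1) dzb_conj unfolding F_def by blast
  have Fc: "\<forall>q. cconj (F q) = F q" by (simp add: F_def)
  have FFz: "\<forall>q\<in>U. clor (F q) (dz F q) = 0"
  proof
    fix q assume q: "q \<in> U"
    from dz_rule(1)[OF U(1) q FF Fd[rule_format, OF q] Fd[rule_format, OF q]]
    show "clor (F q) (dz F q) = 0" by (simp add: clor_sym[of "dz F q"])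
  qed
  have part1: "lor (f p) (W p) = 0 \<and> lor (f p) (pdx W p) = 0 \<and> lor (f p) (pdy W p) = 0"
    if W: "is_lift U N1 N2 W" and p: "p \<in> U" for W p
  proof -
    have Wd: "\<forall>q\<in>U. W differentiable (at q)" using smooth_C2(1) W unfolding is_lift_def by blast
    have Wc: "\<forall>q\<in>U. \<exists>c. W q = c *\<^sub>R (N1 q + N2 q)" using W unfolding is_lift_def by blast
    have fW: "\<forall>q\<in>U. lor (f q) (W q) = 0"
    proof
      fix q assume q: "q \<in> U"
      then obtain c where "W q = c *\<^sub>R (N1 q + N2 q)" using Wc by blast
      then show "lor (f q) (W q) = 0" using normal q by (simp add: lor_lin lor_sym[of "f q"])
    qed
    have fxW: "lor (pdx f p) (W p) = 0 \<and> lor (pdy f p) (W p) = 0"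
    proof -
      obtain c where "W p = c *\<^sub>R (N1 p + N2 p)" using Wc p by blast
      then show ?thesis using normal p by (simp add: lor_lin lor_sym[of "pdx f p"] lor_sym[of "pdy f p"])
    qed
    have FW: "\<forall>q\<in>U. clor (F q) ((cplx \<circ> W) q) = 0" using fW by (simp add: F_def clor_cplx)
    note pr = prod_rule[OF Fd[rule_format, OF p] cplx_deriv(1)[OF Wd[rule_format, OF p]]]
    note co = const_on_open[OF U(1) p FW]
    have "clor (pdx F p) ((cplx \<circ> W) p) + clor (F p) (pdx (cplx \<circ> W) p) = 0" using pr(1) co(1) by simp
    then have x: "lor (f p) (pdx W p) = 0"
      using fxW unfolding F_def cplx_deriv(2)[OF fC(1)[rule_format, OF p]] cplx_deriv(2)[OF Wd[rule_format, OF p]]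
      by (simp add: clor_cplx)
    have "clor (pdy F p) ((cplx \<circ> W) p) + clor (F p) (pdy (cplx \<circ> W) p) = 0" using pr(2) co(2) by simp
    then have y: "lor (f p) (pdy W p) = 0"
      using fxW unfolding F_def cplx_deriv(3)[OF fC(1)[rule_format, OF p]] cplx_deriv(3)[OF Wd[rule_format, OF p]]
      by (simp add: clor_cplx)
    show ?thesis using fW p x y by blast
  qed
  have part2: "{v. \<exists>a b c d. v = cscale a (cplx (X p)) + cscale b (dz (cplx \<circ> X) p)
                                   + cscale c (dzb (cplx \<circ> X) p) + cscale d (dzb (dz (cplx \<circ> X)) p)}
                     = {v. clor (cplx (f p)) v = 0}"
    if X: "is_lift U N1 N2 X" and p: "p \<in> U" for X p
  proof -
    define Xc where "Xc = cplx \<circ> X"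
    have XC: "\<forall>q\<in>U. X differentiable (at q)" "\<forall>q\<in>U. pdx X differentiable (at q)" "\<forall>q\<in>U. pdy X differentiable (at q)"
      using smooth_C2 X unfolding is_lift_def by blast+
    have Xd: "\<forall>q\<in>U. Xc differentiable (at q)" using XC(1) cplx_deriv(1) unfolding Xc_def by blast
    have dzXd: "\<forall>q\<in>U. dz Xc differentiable (at q)"
      using dz_cplx_differentiable[OF U(1) _ XC(1)] XC(2,3) unfolding Xc_def by blast
    have dzbX: "\<forall>q\<in>U. dzb Xc q = cconj (dz Xc q)" using XC(1) dzb_conj unfolding Xc_def by blast
    have Xcc: "\<forall>q. cconj (Xc q) = Xc q" by (simp add: Xc_def)
    have Xlc: "\<forall>q\<in>U. \<exists>c::real. Xc q = complex_of_real c *s (cplx (N1 q) + cplx (N2 q))"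
    proof
      fix q assume q: "q \<in> U"
      then obtain c where "X q = c *\<^sub>R (N1 q + N2 q)" using X unfolding is_lift_def by blast
      then have "Xc q = complex_of_real c *s (cplx (N1 q) + cplx (N2 q))"
        by (simp add: Xc_def cplx_scaleR cplx_add)
      then show "\<exists>c::real. Xc q = complex_of_real c *s (cplx (N1 q) + cplx (N2 q))" by blast
    qed
    have XX: "\<forall>q\<in>U. clor (Xc q) (Xc q) = 0" using X unfolding is_lift_def Xc_def by (simp add: clor_cplx)
    have FX: "\<forall>q\<in>U. clor (F q) (Xc q) = 0"
    proof
      fix q assume q: "q \<in> U"
      then obtain c where "Xc q = complex_of_real c *s (cplx (N1 q) + cplx (N2 q))" using Xlc by blast
      then show "clor (F q) (Xc q) = 0" using FN q by (simp add: clor_lin)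
    qed
    have XFz: "\<forall>q\<in>U. clor (Xc q) (dz F q) = 0"
    proof
      fix q assume q: "q \<in> U"
      then obtain c where "Xc q = complex_of_real c *s (cplx (N1 q) + cplx (N2 q))" using Xlc by blast
      then show "clor (Xc q) (dz F q) = 0" using FzN q by (simp add: clor_lin clor_sym[of _ "dz F q"])
    qed
    have XXz: "\<forall>q\<in>U. clor (Xc q) (dz Xc q) = 0"
    proof
      fix q assume q: "q \<in> U"
      from dz_rule(1)[OF U(1) q XX Xd[rule_format, OF q] Xd[rule_format, OF q]]
      show "clor (Xc q) (dz Xc q) = 0" by (simp add: clor_sym[of "dz Xc q"])
    qed
    have FXz: "\<forall>q\<in>U. clor (F q) (dz Xc q) = 0"
    proof
      fix q assume q: "q \<in> U"
      from dz_rule(1)[OF U(1) q FX Fd[rule_format, OF q] Xd[rule_format, OF q]]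
      show "clor (F q) (dz Xc q) = 0" using XFz q by (simp add: clor_sym[of "dz F q"])
    qed
    note Fdp = Fd[rule_format, OF p] and dzFdp = dzFd[rule_format, OF p]
      and Xdp = Xd[rule_format, OF p] and dzXdp = dzXd[rule_format, OF p]
    have FzzF: "clor (F p) (dz (dz F) p) = 0"
      using dz_rule(1)[OF U(1) p FFz Fdp dzFdp] conformal p by (simp add: F_def)
    have conf0: "\<forall>q\<in>U. clor (dz F q) (dz F q) = 0" using conformal by (simp add: F_def)
    have FzzFz: "clor (dz (dz F) p) (dz F p) = 0"
      using dz_rule(1)[OF U(1) p conf0 dzFdp dzFdp] by (simp add: clor_sym[of "dz F p"])
    have h1: "clor (dz Xc p) (dz F p) + clor (Xc p) (dz (dz F) p) = 0"
      using dz_rule(1)[OF U(1) p XFz Xdp dzFdp] .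
    have h2: "clor (dzb Xc p) (dz F p) + clor (Xc p) (dzb (dz F) p) = 0"
      using dz_rule(2)[OF U(1) p XFz Xdp dzFdp] .
    obtain c :: real where Xp: "Xc p = complex_of_real c *s (cplx (N1 p) + cplx (N2 p))" using Xlc p by blast
    have XH: "clor (Xc p) (dzb (dz F) p) = 0"
    proof -
      have "dzb (dz F) p = cplx (- exp (2 * u p) *\<^sub>R f p + exp (2 * u p) *\<^sub>R H p)"
        using meancurv p by (simp add: F_def)
      moreover have "lor (N1 p) (f p) = 0" "lor (N2 p) (f p) = 0" "lor (N1 p) (N1 p) = 1"
        "lor (N2 p) (N2 p) = -1" "lor (N1 p) (N2 p) = 0" "H p = h p *\<^sub>R (N1 p + N2 p)"
        using normal p frame p orient p by auto
      ultimately show ?thesis unfolding Xp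
        by (simp add: clor_lin cplx_add cplx_scaleR clor_cplx lor_lin lor_sym[of "f p"] lor_sym[of "N2 p" "N1 p"]
            del: of_real_add of_real_mult of_real_minus) (simp add: algebra_simps)
    qed
    have XzbFz: "clor (dzb Xc p) (dz F p) = 0" using h2 XH by simp
    have XXzb: "clor (Xc p) (dzb Xc p) = 0"
      using dz_rule(2)[OF U(1) p XX Xdp Xdp] by (simp add: clor_sym[of "dzb Xc p"])
    have j: "clor (dzb Xc p) (dz Xc p) + clor (Xc p) (dzb (dz Xc) p) = 0"
      using dz_rule(2)[OF U(1) p XXz Xdp dzXdp] .
    have l: "clor (dzb F p) (dz Xc p) + clor (F p) (dzb (dz Xc) p) = 0"
      using dz_rule(2)[OF U(1) p FXz Fdp dzXdp] .
    have Ep: "E p \<noteq> 0" by (simp add: E_def)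
    have Fcp: "cconj (F p) = F p" using Fc by simp
    have dzbFp: "dzb F p = cconj (dz F p)" using dzbF p by blast
    have dzbXp: "dzb Xc p = cconj (dz Xc p)" using dzbX p by blast
    have dzXp: "dz Xc p = cconj (dzb Xc p)" using dzbXp by simp
    have Xcp: "cconj (Xc p) = Xc p" using Xcc by simp
    have g1: "clor (F p) (F p) = 1" using FF p by blast
    have g2: "clor (F p) (dz F p) = 0" using FFz p by blast
    have g3: "clor (F p) (dzb F p) = 0"
      using clor_cconj[of "F p" "dz F p"] g2 unfolding dzbFp Fcp by simp
    have g45: "clor (F p) (cplx (N1 p)) = 0" "clor (F p) (cplx (N2 p)) = 0" using FN p by blast+
    have g6: "clor (dz F p) (dz F p) = 0" using conf0 p by blast
    have g7: "clor (dzb F p) (dzb F p) = 0" using clor_cconj[of "dz F p" "dz F p"] g6 unfolding dzbFp by simp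
    have g8: "clor (dz F p) (dzb F p) = E p" using conformal p by (simp add: F_def E_def)
    have g910: "clor (dz F p) (cplx (N1 p)) = 0" "clor (dz F p) (cplx (N2 p)) = 0" using FzN p by blast+
    have g1112: "clor (dzb F p) (cplx (N1 p)) = 0" "clor (dzb F p) (cplx (N2 p)) = 0"
      unfolding dzbFp clor_conj_real using g910 by simp_all
    have g1315: "clor (cplx (N1 p)) (cplx (N1 p)) = 1" "clor (cplx (N2 p)) (cplx (N2 p)) = -1"
      "clor (cplx (N1 p)) (cplx (N2 p)) = 0" using frame p by (simp_all add: clor_cplx)
    note P = parseval[OF Ep g1 g2 g3 g45 g6 g7 g8 g910 g1112 g1315]
    define a where "a = clor (dz (dz F) p) (cplx (N1 p))"
    define b where "b = clor (dz (dz F) p) (cplx (N2 p))"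
    have "clor (dz (dz F) p) (dz (dz F) p) = a * a - b * b"
      using P[of "dz (dz F) p" "dz (dz F) p"] FzzF FzzFz unfolding a_def b_def by (simp add: clor_sym[of "F p"])
    moreover have "clor (dz (dz F) p) (dz (dz F) p) \<noteq> 0" using nonisotropic p by (simp add: F_def)
    ultimately have ab: "a + b \<noteq> 0"
    proof (intro notI)
      assume "clor (dz (dz F) p) (dz (dz F) p) = a * a - b * b" "clor (dz (dz F) p) (dz (dz F) p) \<noteq> 0" "a + b = 0"
      then show False by (simp add: add_eq_0_iff)
    qed
    have X0: "Xc p \<noteq> 0" using X p unfolding is_lift_def Xc_def by (simp add: cplx_eq0)
    then have c0: "c \<noteq> 0" using Xp by auto
    define \<kappa> where "\<kappa> = clor (dz Xc p) (dz F p)"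
    have XFzz: "clor (Xc p) (dz (dz F) p) = complex_of_real c * (a + b)"
      unfolding Xp a_def b_def by (simp add: clor_lin clor_sym[of _ "dz (dz F) p"] distrib_left)
    have k0: "\<kappa> \<noteq> 0" using h1 XFzz c0 ab unfolding \<kappa>_def by (auto simp: add_eq_0_iff)
    have xz1: "clor (dz Xc p) (F p) = 0" using FXz p clor_sym[of "F p" "dz Xc p"] by simp
    have xz2: "clor (dz Xc p) (dzb F p) = 0"
      using clor_cconj[of "dzb Xc p" "dz F p"] XzbFz unfolding dzXp[symmetric] dzbFp[symmetric] by simp
    have "clor (Xc p) (dz Xc p) = 0" using XXz p by blast
    then have "complex_of_real c * (clor (cplx (N1 p)) (dz Xc p) + clor (cplx (N2 p)) (dz Xc p)) = 0"
      unfolding Xp by (simp add: clor_lin distrib_left)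
    then have "clor (cplx (N1 p)) (dz Xc p) + clor (cplx (N2 p)) (dz Xc p) = 0" using c0 by simp
    then have xz4: "clor (dz Xc p) (cplx (N2 p)) = - clor (dz Xc p) (cplx (N1 p))"
      by (simp add: clor_sym[of "cplx (N1 p)" "dz Xc p"] clor_sym[of "cplx (N2 p)" "dz Xc p"] add_eq_0_iff)
    have xb1: "clor (dzb Xc p) (F p) = 0"
      using clor_cconj[of "dz Xc p" "F p"] xz1 unfolding dzbXp Fcp by simp
    have xb3: "clor (dzb Xc p) (dzb F p) = cnj \<kappa>"
      using clor_cconj[of "dz Xc p" "dz F p"] unfolding dzbXp dzbFp \<kappa>_def by simp
    have "complex_of_real c * (clor (cplx (N1 p)) (dzb Xc p) + clor (cplx (N2 p)) (dzb Xc p)) = 0"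
      using XXzb unfolding Xp by (simp add: clor_lin distrib_left)
    then have "clor (cplx (N1 p)) (dzb Xc p) + clor (cplx (N2 p)) (dzb Xc p) = 0" using c0 by simp
    then have xb4: "clor (dzb Xc p) (cplx (N2 p)) = - clor (dzb Xc p) (cplx (N1 p))"
      by (simp add: clor_sym[of "cplx (N1 p)" "dzb Xc p"] clor_sym[of "cplx (N2 p)" "dzb Xc p"] add_eq_0_iff)
    define k where "k = \<kappa> * cnj \<kappa> / E p"
    have kk: "clor (dz Xc p) (dzb Xc p) = k"
      using P[of "dz Xc p" "dzb Xc p"] xz1 xz2 xb1 XzbFz xb3 xz4 xb4 unfolding k_def \<kappa>_def by simp
    have k0': "k \<noteq> 0" using k0 Ep unfolding k_def by simp
    have zz: "clor (dz Xc p) (dz Xc p) = 0"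
      using P[of "dz Xc p" "dz Xc p"] xz1 xz2 xz4 by simp
    have bb: "clor (dzb Xc p) (dzb Xc p) = 0"
      using P[of "dzb Xc p" "dzb Xc p"] xb1 XzbFz xb4 by simp
    have FXzzb: "clor (F p) (dzb (dz Xc) p) = 0"
    proof -
      have "clor (dzb F p) (dz Xc p) = cnj (clor (dz F p) (dzb Xc p))"
        using clor_cconj[of "dz F p" "dzb Xc p"] unfolding dzbFp[symmetric] dzXp[symmetric] .
      then have "clor (dzb F p) (dz Xc p) = 0" using XzbFz by (simp add: clor_sym[of "dz F p"])
      then show ?thesis using l by simp
    qed
    have XXzzb: "clor (Xc p) (dzb (dz Xc) p) = - k" using j kk by (simp add: clor_sym[of "dzb Xc p"] add_eq_0_iff)
    have XXz: "clor (Xc p) (dz Xc p) = 0" using XXz p by blast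
    have XX0: "clor (Xc p) (Xc p) = 0" using XX p by blast
    have FXp: "clor (F p) (Xc p) = 0" using FX p by blast
    have FXzp: "clor (F p) (dz Xc p) = 0" using FXz p by blast
    have FXzbp: "clor (F p) (dzb Xc p) = 0" using xb1 clor_sym[of "F p" "dzb Xc p"] by simp
    have XzX: "clor (dz Xc p) (Xc p) = 0" using XXz clor_sym[of "Xc p" "dz Xc p"] by simp
    have XzbX: "clor (dzb Xc p) (Xc p) = 0" using XXzb clor_sym[of "Xc p" "dzb Xc p"] by simp
    have kk': "clor (dzb Xc p) (dz Xc p) = k" using kk clor_sym[of "dz Xc p" "dzb Xc p"] by simp
    note facts = g1 FXp FXzp FXzbp FXzzb XX0 XXz XXzb XXzzb zz bb kk XzX XzbX kk'
    have ind: "a=0 \<and> b=0 \<and> c=0 \<and> d=0 \<and> e=0"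
      if z: "a *s Xc p + b *s dz Xc p + c *s dzb Xc p + d *s dzb (dz Xc) p + e *s F p = 0"
      for a b c d e
    proof -
      let ?v = "a *s Xc p + b *s dz Xc p + c *s dzb Xc p + d *s dzb (dz Xc) p + e *s F p"
      have "clor (F p) ?v = e" using facts by (simp add: clor_lin)
      then have e0: "e = 0" unfolding z by simp
      have "clor (Xc p) ?v = - d * k + e * clor (Xc p) (F p)" using facts by (simp add: clor_lin)
      then have d0: "d = 0" unfolding z using e0 k0' by simp
      have "clor (dz Xc p) ?v = c * k + d * clor (dz Xc p) (dzb (dz Xc) p) + e * clor (dz Xc p) (F p)"
        using facts by (simp add: clor_lin)
      then have c0: "c = 0" unfolding z using e0 d0 k0' by simp
      have "clor (dzb Xc p) ?v = b * k + c * clor (dzb Xc p) (dzb Xc p) + d * clor (dzb Xc p) (dzb (dz Xc) p) + e * clor (dzb Xc p) (F p)"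
        using facts by (simp add: clor_lin)
      then have b0: "b = 0" unfolding z using e0 d0 c0 k0' by simp
      have "a *s Xc p = 0" using z b0 c0 d0 e0 by simp
      then have "a = 0" using X0 by simp
      then show ?thesis using b0 c0 d0 e0 by simp
    qed
    have fF: "cplx (f p) = F p" by (simp add: F_def)
    show ?thesis
    proof (rule set_eqI, rule iffI)
      fix v assume "v \<in> {v. \<exists>a b c d. v = cscale a (cplx (X p)) + cscale b (dz (cplx \<circ> X) p)
                                   + cscale c (dzb (cplx \<circ> X) p) + cscale d (dzb (dz (cplx \<circ> X)) p)}"
      then obtain a b c d where v: "v = a *s Xc p + b *s dz Xc p + c *s dzb Xc p + d *s dzb (dz Xc) p"
        unfolding Xc_def cscale_eq by auto
      show "v \<in> {v. clor (cplx (f p)) v = 0}" unfolding fF v using facts by (simp add: clor_lin)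
    next
      fix v assume "v \<in> {v. clor (cplx (f p)) v = 0}"
      then have v0: "clor (F p) v = 0" unfolding fF by simp
      obtain a b c d e where v: "v = a *s Xc p + b *s dz Xc p + c *s dzb Xc p + d *s dzb (dz Xc) p + e *s F p"
        using span5[OF ind] by blast
      have "clor (F p) v = e" unfolding v using facts by (simp add: clor_lin)
      then have "e = 0" using v0 by simp
      then have "v = a *s Xc p + b *s dz Xc p + c *s dzb Xc p + d *s dzb (dz Xc) p" using v by simp
      then show "v \<in> {v. \<exists>a b c d. v = cscale a (cplx (X p)) + cscale b (dz (cplx \<circ> X) p)
                                   + cscale c (dzb (cplx \<circ> X) p) + cscale d (dzb (dz (cplx \<circ> X)) p)}"
        unfolding Xc_def cscale_eq by auto
    qed
  qed
  show ?thesis using part1 part2 by blast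
qed


end
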